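(* Let $(\mathcal{C},S)$ be a quasi-schemoid and let $F\colon(\mathcal{C},S)\to(\mathcal{C},S)$ be a morphism of quasi-schemoids with $F\simeq 1_{\mathcal{C}}$. Suppose that the set $\mathbf{1}=\{1_x\}_{x\in ob(\mathcal{C})}$ of identity morphisms is contained in a single element of the partition $S$, and that $F(f)$ is an identity morphism for some non-identity morphism $f\in mor(\mathcal{C})$. Then there exist $\sigma,\tau\in S$ such that $\tau$ contains a non-identity morphism and $p^{\sigma}_{\sigma\tau}\neq0$ or $p^{\sigma}_{\tau\sigma}\neq0$.
   Context: A quasi-schemoid is a pair $(\mathcal{C},S)$ where $\mathcal{C}$ is a small category and $S$ is a partition of $mor(\mathcal{C})$ such that for all $\sigma,\tau,\mu\in S$ and all $f,g\in\mu$ the sets $\{(a,b)\in\sigma\times\tau : s(a)=t(b),\ a\circ b=f\}$ and $\{(a,b)\in\sigma\times\tau : s(a)=t(b),\ a\circ b=g\}$ have the same cardinality; this common cardinality is denoted $p^{\mu}_{\sigma\tau}$. A morphism of quasi-schemoids is a functor sending each block of the source partition into some block of the target partition. Product: $(\mathcal{C},S)\times(\mathcal{E},S')=(\mathcal{C}\times\mathcal{E},\{\sigma\times\tau\})$. $[1]$ is the category with objects $0,1$ and one non-identity morphism $0\to1$, and $I=([1],\{\{f\}\}_{f\in mor([1])})$. A homotopy $H\colon F\Rightarrow G$ between morphisms $F,G\colon(\mathcal{C},S)\to(\mathcal{D},S')$ is a morphism of quasi-schemoids $H\colon(\mathcal{C},S)\times I\to(\mathcal{D},S')$ with $H\circ\varepsilon_0=F$,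 $H\circ\varepsilon_1=G$, where $\varepsilon_i(a)=(a,i)$, $\varepsilon_i(f)=(f,1_i)$. $F\sim G$ if there is a homotopy $F\Rightarrow G$ or $G\Rightarrow F$; $F\simeq G$ if there is a finite chain $F=F_0\sim\cdots\sim F_n=G$. *)

theory Defs
  imports Main "HOL-Library.Equipollence"
begin

(* A small category: carrier sets of objects and morphisms, source/target,
   identities and composition.  comp a b = a \<circ> b, defined when dom a = cod b. *)
record ('o,'m) cat =
  Obj  :: "'o set"
  Mor  :: "'m set"
  Dom  :: "'m \<Rightarrow> 'o"
  Cod  :: "'m \<Rightarrow> 'o"
  Idm  :: "'o \<Rightarrow> 'm"
  Comp :: "'m \<Rightarrow> 'm \<Rightarrow> 'm"

definition is_cat :: "('o,'m) cat \<Rightarrow> bool" where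
  "is_cat C \<longleftrightarrow>
     (\<forall>f\<in>Mor C. Dom C f \<in> Obj C \<and> Cod C f \<in> Obj C) \<and>
     (\<forall>x\<in>Obj C. Idm C x \<in> Mor C \<and> Dom C (Idm C x) = x \<and> Cod C (Idm C x) = x) \<and>
     (\<forall>a\<in>Mor C. \<forall>b\<in>Mor C. Dom C a = Cod C b \<longrightarrow>
         Comp C a b \<in> Mor C \<and> Dom C (Comp C a b) = Dom C b \<and> Cod C (Comp C a b) = Cod C a) \<and>
     (\<forall>f\<in>Mor C. Comp C (Idm C (Cod C f)) f = f \<and> Comp C f (Idm C (Dom C f)) = f) \<and>
     (\<forall>a\<in>Mor C. \<forall>b\<in>Mor C. \<forall>c\<in>Mor C. Dom C a = Cod C b \<longrightarrow> Dom C b = Cod C c \<longrightarrow>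
         Comp C (Comp C a b) c = Comp C a (Comp C b c))"

definition is_partition :: "'a set set \<Rightarrow> 'a set \<Rightarrow> bool" where
  "is_partition S A \<longleftrightarrow> (\<forall>\<sigma>\<in>S. \<sigma> \<noteq> {}) \<and> \<Union>S = A \<and>
     (\<forall>\<sigma>\<in>S. \<forall>\<tau>\<in>S. \<sigma> \<noteq> \<tau> \<longrightarrow> \<sigma> \<inter> \<tau> = {})"

definition pset :: "('o,'m) cat \<Rightarrow> 'm set \<Rightarrow> 'm set \<Rightarrow> 'm \<Rightarrow> ('m \<times> 'm) set" where
  "pset C \<sigma> \<tau> f = {(a,b). a \<in> \<sigma> \<and> b \<in> \<tau> \<and> Dom C a = Cod C b \<and> Comp C a b = f}"

(* same cardinality = equipollent (cardinalities may be infinite) *)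
definition quasi_schemoid :: "('o,'m) cat \<Rightarrow> 'm set set \<Rightarrow> bool" where
  "quasi_schemoid C S \<longleftrightarrow> is_cat C \<and> is_partition S (Mor C) \<and>
     (\<forall>\<sigma>\<in>S. \<forall>\<tau>\<in>S. \<forall>\<mu>\<in>S. \<forall>f\<in>\<mu>. \<forall>g\<in>\<mu>. pset C \<sigma> \<tau> f \<approx> pset C \<sigma> \<tau> g)"

(* p^\<mu>_{\<sigma>\<tau>} \<noteq> 0 : the common cardinality is nonzero, i.e. the sets are nonempty *)
definition p_nonzero :: "('o,'m) cat \<Rightarrow> 'm set \<Rightarrow> 'm set \<Rightarrow> 'm set \<Rightarrow> bool" where
  "p_nonzero C \<mu> \<sigma> \<tau> \<longleftrightarrow> (\<exists>f\<in>\<mu>. pset C \<sigma> \<tau> f \<noteq> {})"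

(* functors as pairs (object map, morphism map), only relevant on carriers *)
type_synonym ('o1,'m1,'o2,'m2) ftor = "('o1 \<Rightarrow> 'o2) \<times> ('m1 \<Rightarrow> 'm2)"

definition is_functor :: "('o1,'m1) cat \<Rightarrow> ('o2,'m2) cat \<Rightarrow> ('o1,'m1,'o2,'m2) ftor \<Rightarrow> bool" where
  "is_functor C D F \<longleftrightarrow>
     (\<forall>x\<in>Obj C. fst F x \<in> Obj D) \<and>
     (\<forall>f\<in>Mor C. snd F f \<in> Mor D \<and> Dom D (snd F f) = fst F (Dom C f) \<and> Cod D (snd F f) = fst F (Cod C f)) \<and>
     (\<forall>x\<in>Obj C. snd F (Idm C x) = Idm D (fst F x)) \<and>
     (\<forall>a\<in>Mor C. \<forall>b\<in>Mor C. Dom C a = Cod C b \<longrightarrow> snd F (Comp C a b) = Comp D (snd F a) (snd F b))"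

definition qs_morphism :: "('o1,'m1) cat \<Rightarrow> 'm1 set set \<Rightarrow> ('o2,'m2) cat \<Rightarrow> 'm2 set set
     \<Rightarrow> ('o1,'m1,'o2,'m2) ftor \<Rightarrow> bool" where
  "qs_morphism C S D S' F \<longleftrightarrow> is_functor C D F \<and> (\<forall>\<sigma>\<in>S. \<exists>\<sigma>'\<in>S'. snd F ` \<sigma> \<subseteq> \<sigma>')"

definition id_ftor :: "('o,'m,'o,'m) ftor" where
  "id_ftor = (id, id)"

definition prod_cat :: "('o1,'m1) cat \<Rightarrow> ('o2,'m2) cat \<Rightarrow> ('o1 \<times> 'o2, 'm1 \<times> 'm2) cat" where
  "prod_cat C E = \<lparr> Obj = Obj C \<times> Obj E, Mor = Mor C \<times> Mor E,
      Dom = (\<lambda>(f,g). (Dom C f, Dom E g)), Cod = (\<lambda>(f,g). (Cod C f, Cod E g)),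
      Idm = (\<lambda>(x,y). (Idm C x, Idm E y)),
      Comp = (\<lambda>(a,a') (b,b'). (Comp C a b, Comp E a' b')) \<rparr>"

definition prod_part :: "'a set set \<Rightarrow> 'b set set \<Rightarrow> ('a \<times> 'b) set set" where
  "prod_part S S' = {\<sigma> \<times> \<tau> | \<sigma> \<tau>. \<sigma> \<in> S \<and> \<tau> \<in> S'}"

(* the category [1]: objects 0,1; morphisms (i,j) with i \<le> j \<le> 1 meaning i \<rightarrow> j *)
definition cat1 :: "(nat, nat \<times> nat) cat" where
  "cat1 = \<lparr> Obj = {0,1}, Mor = {(i,j). i \<le> j \<and> j \<le> 1},
      Dom = fst, Cod = snd, Idm = (\<lambda>i. (i,i)),
      Comp = (\<lambda>a b. (fst b, snd a)) \<rparr>"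

definition part1 :: "(nat \<times> nat) set set" where
  "part1 = {{f} | f. f \<in> Mor cat1}"

definition homotopy :: "('o1,'m1) cat \<Rightarrow> 'm1 set set \<Rightarrow> ('o2,'m2) cat \<Rightarrow> 'm2 set set
     \<Rightarrow> ('o1 \<times> nat, 'm1 \<times> (nat \<times> nat), 'o2, 'm2) ftor
     \<Rightarrow> ('o1,'m1,'o2,'m2) ftor \<Rightarrow> ('o1,'m1,'o2,'m2) ftor \<Rightarrow> bool" where
  "homotopy C S D S' H F G \<longleftrightarrow>
     qs_morphism (prod_cat C cat1) (prod_part S part1) D S' H \<and>
     (\<forall>x\<in>Obj C. fst H (x,0) = fst F x \<and> fst H (x,1) = fst G x) \<and>
     (\<forall>f\<in>Mor C. snd H (f,(0,0)) = snd F f \<and> snd H (f,(1,1)) = snd G f)"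

definition htpy_step :: "('o1,'m1) cat \<Rightarrow> 'm1 set set \<Rightarrow> ('o2,'m2) cat \<Rightarrow> 'm2 set set
     \<Rightarrow> ('o1,'m1,'o2,'m2) ftor \<Rightarrow> ('o1,'m1,'o2,'m2) ftor \<Rightarrow> bool" where
  "htpy_step C S D S' F G \<longleftrightarrow> (\<exists>H. homotopy C S D S' H F G) \<or> (\<exists>H. homotopy C S D S' H G F)"

definition htpy_equiv :: "('o1,'m1) cat \<Rightarrow> 'm1 set set \<Rightarrow> ('o2,'m2) cat \<Rightarrow> 'm2 set set
     \<Rightarrow> ('o1,'m1,'o2,'m2) ftor \<Rightarrow> ('o1,'m1,'o2,'m2) ftor \<Rightarrow> bool" where
  "htpy_equiv C S D S' = (htpy_step C S D S')\<^sup>*\<^sup>*"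

end

theory Submission
  imports Defs
begin

lemma chain_switch:
  assumes "R\<^sup>*\<^sup>* a b" "P a" "\<not> P b"
  shows "\<exists>c d. R c d \<and> P c \<and> \<not> P d"
  using assms by (induction rule: rtranclp_induct) blast+

lemma core:
  fixes C :: "('o,'m) cat" and H :: "('o \<times> nat, 'm \<times> (nat \<times> nat), 'o, 'm) ftor"
  assumes cat: "is_cat C" and part: "is_partition S (Mor C)"
    and io: "\<iota> \<in> S" "Idm C ` Obj C \<subseteq> \<iota>"
    and hom: "homotopy C S C S H G G'" and f: "f \<in> Mor C"
    and ex: "(snd G f \<in> Idm C ` Obj C) \<noteq> (snd G' f \<in> Idm C ` Obj C)"
  shows "\<exists>\<sigma>\<in>S. \<exists>\<tau>\<in>S. (\<exists>g\<in>\<tau>. g \<notin> Idm C ` Obj C) \<and>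
           (p_nonzero C \<sigma> \<sigma> \<tau> \<or> p_nonzero C \<sigma> \<tau> \<sigma>)"
proof -
  define x where "x = Dom C f"
  define y where "y = Cod C f"
  define u where "u = ((0::nat),(1::nat))"
  have xy: "x \<in> Obj C" "y \<in> Obj C" using cat f unfolding is_cat_def x_def y_def by auto
  have ix: "Idm C x \<in> Mor C" "Dom C (Idm C x) = x" "Cod C (Idm C x) = x"
   and iy: "Idm C y \<in> Mor C" "Dom C (Idm C y) = y" "Cod C (Idm C y) = y"
    using cat xy unfolding is_cat_def by auto
  have fid: "Comp C f (Idm C x) = f" "Comp C (Idm C y) f = f"
    using cat f unfolding is_cat_def x_def y_def by auto
  have Hf: "is_functor (prod_cat C cat1) C H"
    and Hb: "\<forall>\<sigma>\<in>prod_part S part1. \<exists>\<sigma>'\<in>S. snd H ` \<sigma> \<subseteq> \<sigma>'"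
    and HG: "snd H (f,(0,0)) = snd G f" "snd H (f,(1,1)) = snd G' f"
    using hom f unfolding homotopy_def qs_morphism_def by auto
  have mu: "u \<in> Mor cat1" "(0::nat,0::nat) \<in> Mor cat1" "(1::nat,1::nat) \<in> Mor cat1"
    unfolding u_def cat1_def by auto
  have HM: "\<And>a b. a \<in> Mor C \<Longrightarrow> b \<in> Mor cat1 \<Longrightarrow> snd H (a,b) \<in> Mor C \<and>
      Dom C (snd H (a,b)) = fst H (Dom C a, fst b) \<and> Cod C (snd H (a,b)) = fst H (Cod C a, snd b)"
    using Hf unfolding is_functor_def prod_cat_def cat1_def by auto
  have HC: "\<And>a a' b b'. a \<in> Mor C \<Longrightarrow> b \<in> Mor C \<Longrightarrow> a' \<in> Mor cat1 \<Longrightarrow> b' \<in> Mor cat1 \<Longrightarrow>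
      Dom C a = Cod C b \<Longrightarrow> fst a' = snd b' \<Longrightarrow>
      snd H (Comp C a b, (fst b', snd a')) = Comp C (snd H (a,a')) (snd H (b,b'))"
  proof -
    fix a a' b b' assume *: "a \<in> Mor C" "b \<in> Mor C" "a' \<in> Mor cat1" "b' \<in> Mor cat1"
      "Dom C a = Cod C b" "fst a' = snd b'"
    have "snd H (Comp (prod_cat C cat1) (a,a') (b,b')) =
       Comp C (snd H (a,a')) (snd H (b,b'))"
      using Hf * unfolding is_functor_def by (auto simp: prod_cat_def cat1_def)
    then show "snd H (Comp C a b, (fst b', snd a')) = Comp C (snd H (a,a')) (snd H (b,b'))"
      by (simp add: prod_cat_def cat1_def)
  qed
  have e1: "snd H (f,u) = Comp C (snd G' f) (snd H (Idm C x, u))"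
    using HC[OF f ix(1) mu(3) mu(1)] fid ix HG unfolding u_def x_def by simp
  have e2: "snd H (f,u) = Comp C (snd H (Idm C y, u)) (snd G f)"
    using HC[OF iy(1) f mu(1) mu(2)] fid iy HG unfolding u_def y_def by simp
  have "\<iota> \<times> {u} \<in> prod_part S part1"
    using io mu unfolding prod_part_def part1_def by blast
  then obtain \<theta> where th: "\<theta> \<in> S" "snd H ` (\<iota> \<times> {u}) \<subseteq> \<theta>" using Hb by blast
  have tx: "snd H (Idm C x, u) \<in> \<theta>" and ty: "snd H (Idm C y, u) \<in> \<theta>"
  proof -
    have "(Idm C x, u) \<in> \<iota> \<times> {u}" "(Idm C y, u) \<in> \<iota> \<times> {u}" using io(2) xy by auto
    then show "snd H (Idm C x, u) \<in> \<theta>" "snd H (Idm C y, u) \<in> \<theta>" using th(2) by auto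
  qed
  have dx: "snd H (Idm C x, u) \<in> Mor C" "Cod C (snd H (Idm C x, u)) = fst H (x,1)"
    using HM[OF ix(1) mu(1)] ix unfolding u_def by auto
  have dy: "snd H (Idm C y, u) \<in> Mor C" "Dom C (snd H (Idm C y, u)) = fst H (y,0)"
    using HM[OF iy(1) mu(1)] iy unfolding u_def by auto
  have dG: "snd G f \<in> Mor C" "Cod C (snd G f) = fst H (y,0)"
    using HM[OF f mu(2)] HG unfolding y_def by auto
  have dG': "snd G' f \<in> Mor C" "Dom C (snd G' f) = fst H (x,1)"
    using HM[OF f mu(3)] HG unfolding x_def by auto
  have hu: "snd H (f,u) \<in> Mor C" using HM[OF f mu(1)] by auto
  have idl: "\<And>g. g \<in> Mor C \<Longrightarrow> Comp C g (Idm C (Dom C g)) = g"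
   and idr: "\<And>g. g \<in> Mor C \<Longrightarrow> Comp C (Idm C (Cod C g)) g = g"
    using cat unfolding is_cat_def by auto
  have blk: "\<And>g. g \<in> Mor C \<Longrightarrow> \<exists>\<tau>\<in>S. g \<in> \<tau>" using part unfolding is_partition_def by auto
  show ?thesis
  proof (cases "snd G f \<in> Idm C ` Obj C")
    case True
    then obtain w where w: "w \<in> Obj C" "snd G f = Idm C w" by auto
    have "Cod C (Idm C w) = w" using cat w unfolding is_cat_def by auto
    then have "w = Dom C (snd H (Idm C y,u))" using w dG dy by simp
    then have "snd H (f,u) = snd H (Idm C y, u)" using e2 w(2) idl[OF dy(1)] by simp
    then have A: "Comp C (snd G' f) (snd H (Idm C x, u)) \<in> \<theta>" using e1 ty by simp
    have ng: "snd G' f \<notin> Idm C ` Obj C" using True ex by simp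
    obtain \<tau> where tau: "\<tau> \<in> S" "snd G' f \<in> \<tau>" using blk dG' by blast
    have "p_nonzero C \<theta> \<tau> \<theta>"
    proof -
      have "(snd G' f, snd H (Idm C x, u)) \<in> pset C \<tau> \<theta> (Comp C (snd G' f) (snd H (Idm C x, u)))"
        unfolding pset_def using tau tx dx dG' by simp
      then show ?thesis unfolding p_nonzero_def using A by blast
    qed
    then show ?thesis using th tau ng by blast
  next
    case False
    then have "snd G' f \<in> Idm C ` Obj C" using ex by simp
    then obtain w where w: "w \<in> Obj C" "snd G' f = Idm C w" by auto
    have "Dom C (Idm C w) = w" using cat w unfolding is_cat_def by auto
    then have "w = Cod C (snd H (Idm C x,u))" using w dG' dx by simp
    then have "snd H (f,u) = snd H (Idm C x, u)" using e1 w(2) idr[OF dx(1)] by simp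
    then have A: "Comp C (snd H (Idm C y, u)) (snd G f) \<in> \<theta>" using e2 tx by simp
    obtain \<tau> where tau: "\<tau> \<in> S" "snd G f \<in> \<tau>" using blk dG by blast
    have "p_nonzero C \<theta> \<theta> \<tau>"
    proof -
      have "(snd H (Idm C y, u), snd G f) \<in> pset C \<theta> \<tau> (Comp C (snd H (Idm C y, u)) (snd G f))"
        unfolding pset_def using tau ty dy dG by simp
      then show ?thesis unfolding p_nonzero_def using A by blast
    qed
    then show ?thesis using th tau False by blast
  qed
qed

theorem proposition3p7:
  fixes C :: "('o,'m) cat" and S :: "'m set set" and F :: "('o,'m,'o,'m) ftor"
  assumes "quasi_schemoid C S"
    and "qs_morphism C S C S F"
    and "htpy_equiv C S C S F id_ftor"
    and "\<exists>\<sigma>\<in>S. Idm C ` Obj C \<subseteq> \<sigma>"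
    and "\<exists>f\<in>Mor C. f \<notin> Idm C ` Obj C \<and> snd F f \<in> Idm C ` Obj C"
  shows "\<exists>\<sigma>\<in>S. \<exists>\<tau>\<in>S. (\<exists>g\<in>\<tau>. g \<notin> Idm C ` Obj C) \<and>
           (p_nonzero C \<sigma> \<sigma> \<tau> \<or> p_nonzero C \<sigma> \<tau> \<sigma>)"
proof -
  obtain f where f: "f \<in> Mor C" "f \<notin> Idm C ` Obj C" "snd F f \<in> Idm C ` Obj C" using assms(5) by blast
  obtain \<iota> where io: "\<iota> \<in> S" "Idm C ` Obj C \<subseteq> \<iota>" using assms(4) by blast
  have cat: "is_cat C" and part: "is_partition S (Mor C)"
    using assms(1) unfolding quasi_schemoid_def by auto
  have "(htpy_step C S C S)\<^sup>*\<^sup>* F id_ftor" using assms(3) unfolding htpy_equiv_def .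
  moreover have "\<not> (snd id_ftor f \<in> Idm C ` Obj C)" using f by (simp add: id_ftor_def)
  ultimately obtain G G' where st: "htpy_step C S C S G G'"
    "snd G f \<in> Idm C ` Obj C" "snd G' f \<notin> Idm C ` Obj C"
    using chain_switch[where P="\<lambda>G. snd G f \<in> Idm C ` Obj C", OF _ f(3)] by blast
  show ?thesis
  proof (cases "\<exists>H. homotopy C S C S H G G'")
    case True
    then obtain H where "homotopy C S C S H G G'" by blast
    then show ?thesis using core[OF cat part io _ f(1)] st by blast
  next
    case False
    then obtain H where "homotopy C S C S H G' G" using st(1) unfolding htpy_step_def by blast
    then show ?thesis using core[OF cat part io _ f(1)] st by blast
  qed
qed

end
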